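(* Let $\mathbb{X},\mathbb{Y}$ be finite-dimensional real Banach spaces and let $T\in\mathbb{L}(\mathbb{X},\mathbb{Y})$ be bijective. Then $T$ preserves parallel pairs if and only if $T$ preserves TEA pairs.
   Context: $(x,y)$ is a parallel pair if $\|x+\lambda y\|=\|x\|+\|y\|$ for some scalar $\lambda$ with $|\lambda|=1$; $(x,y)$ is a TEA pair if $\|x+y\|=\|x\|+\|y\|$. $T$ preserves parallel (resp. TEA) pairs if for all $x,y\in\mathbb{X}$, $(x,y)$ a parallel (resp. TEA) pair implies $(Tx,Ty)$ is a parallel (resp. TEA) pair. *)

theory Defs
  imports "HOL-Analysis.Analysis"
begin

definition parallel_pair :: "'a::real_normed_vector \<Rightarrow> 'a \<Rightarrow> bool" where
  "parallel_pair x y \<longleftrightarrow> (\<exists>c::real. \<bar>c\<bar> = 1 \<and> norm (x + c *\<^sub>R y) = norm x + norm y)"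

definition tea_pair :: "'a::real_normed_vector \<Rightarrow> 'a \<Rightarrow> bool" where
  "tea_pair x y \<longleftrightarrow> norm (x + y) = norm x + norm y"

definition preserves_parallel :: "('a::real_normed_vector \<Rightarrow> 'b::real_normed_vector) \<Rightarrow> bool" where
  "preserves_parallel T \<longleftrightarrow> (\<forall>x y. parallel_pair x y \<longrightarrow> parallel_pair (T x) (T y))"

definition preserves_tea :: "('a::real_normed_vector \<Rightarrow> 'b::real_normed_vector) \<Rightarrow> bool" where
  "preserves_tea T \<longleftrightarrow> (\<forall>x y. tea_pair x y \<longrightarrow> tea_pair (T x) (T y))"

definition finite_dim_space :: "'a::real_vector itself \<Rightarrow> bool" where
  "finite_dim_space _ \<longleftrightarrow> (\<exists>B::'a set. finite B \<and> span B = UNIV)"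

end

theory Submission
  imports Defs
begin

lemma tea_scale:
  fixes a b :: "'a::real_normed_vector"
  assumes ab: "norm (a + b) = norm a + norm b" and al: "0 \<le> \<alpha>" and be: "0 \<le> \<beta>"
  shows "norm (\<alpha> *\<^sub>R a + \<beta> *\<^sub>R b) = \<alpha> * norm a + \<beta> * norm b"
proof -
  have up: "norm (\<alpha> *\<^sub>R a + \<beta> *\<^sub>R b) \<le> \<alpha> * norm a + \<beta> * norm b"
    using norm_triangle_ineq[of "\<alpha> *\<^sub>R a" "\<beta> *\<^sub>R b"] al be by simp
  have low: "\<alpha> * norm a + \<beta> * norm b \<le> norm (\<alpha> *\<^sub>R a + \<beta> *\<^sub>R b)"
  proof (cases "\<beta> \<le> \<alpha>")
    case True
    have e: "\<alpha> *\<^sub>R (a + b) = (\<alpha> *\<^sub>R a + \<beta> *\<^sub>R b) + (\<alpha> - \<beta>) *\<^sub>R b"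
      by (simp add: algebra_simps)
    have "\<alpha> * (norm a + norm b) = norm (\<alpha> *\<^sub>R (a + b))" using ab al by simp
    also have "\<dots> \<le> norm (\<alpha> *\<^sub>R a + \<beta> *\<^sub>R b) + (\<alpha> - \<beta>) * norm b"
      unfolding e using norm_triangle_ineq[of "\<alpha> *\<^sub>R a + \<beta> *\<^sub>R b" "(\<alpha> - \<beta>) *\<^sub>R b"] True by simp
    finally show ?thesis by (simp add: algebra_simps)
  next
    case False
    have e: "\<beta> *\<^sub>R (a + b) = (\<alpha> *\<^sub>R a + \<beta> *\<^sub>R b) + (\<beta> - \<alpha>) *\<^sub>R a"
      by (simp add: algebra_simps)
    have "\<beta> * (norm a + norm b) = norm (\<beta> *\<^sub>R (a + b))" using ab be by simp
    also have "\<dots> \<le> norm (\<alpha> *\<^sub>R a + \<beta> *\<^sub>R b) + (\<beta> - \<alpha>) * norm a"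
      unfolding e using norm_triangle_ineq[of "\<alpha> *\<^sub>R a + \<beta> *\<^sub>R b" "(\<beta> - \<alpha>) *\<^sub>R a"] False by simp
    finally show ?thesis by (simp add: algebra_simps)
  qed
  show ?thesis using up low by linarith
qed

lemma key:
  fixes u v :: "'b::real_normed_vector"
  defines "w \<equiv> \<lambda>t::real. (1 - t) *\<^sub>R u + t *\<^sub>R v"
  assumes par: "\<And>a b. a \<in> {0..1} \<Longrightarrow> b \<in> {0..1} \<Longrightarrow> parallel_pair (w a) (w b)"
    and nz: "\<And>t. t \<in> {0..1} \<Longrightarrow> w t \<noteq> 0"
  shows "tea_pair u v"
proof -
  define h where "h t = norm (w t)" for t
  have cont: "continuous_on {0..1} h" unfolding h_def w_def by (intro continuous_intros)
  obtain t0 where t0: "t0 \<in> {0..1}" "\<forall>t\<in>{0..1}. h t0 \<le> h t"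
    using continuous_attains_inf[OF compact_Icc _ cont] by auto
  define m where "m = h t0"
  have mpos: "m > 0" using nz t0 unfolding m_def h_def by auto
  obtain n :: nat where n: "norm (u - v) / m < real n" using reals_Archimedean2 by blast
  have "0 \<le> norm (u - v) / m" using mpos by simp
  hence npos: "real n > 0" using n by linarith
  have nm: "norm (u - v) < real n * m" using n mpos by (simp add: field_simps)
  have wdiff: "w a - w b = (b - a) *\<^sub>R (u - v)" for a b unfolding w_def by (simp add: algebra_simps)
  have local: "tea_pair (w a) (w b)" if ab: "a \<in> {0..1}" "b \<in> {0..1}" "\<bar>b - a\<bar> \<le> 2 / real n" for a b
  proof -
    from par[OF ab(1,2)] obtain c where c: "\<bar>c\<bar> = 1" "norm (w a + c *\<^sub>R w b) = norm (w a) + norm (w b)"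
      unfolding parallel_pair_def by auto
    show ?thesis
    proof (cases "c = 1")
      case True then show ?thesis using c unfolding tea_pair_def by simp
    next
      case False then have "c = -1" using c(1) by linarith
      hence eq: "norm (w a - w b) = h a + h b" using c by (simp add: h_def)
      have "norm (w a - w b) = \<bar>b - a\<bar> * norm (u - v)" by (simp add: wdiff)
      also have "\<dots> \<le> 2 / real n * norm (u - v)" by (rule mult_right_mono) (use ab in auto)
      also have "\<dots> < 2 / real n * (real n * m)" using nm npos by (simp add: field_simps)
      also have "\<dots> = 2 * m" using npos by simp
      also have "2 * m \<le> h a + h b"
      proof -
        have "h t0 \<le> h a" "h t0 \<le> h b" using t0(2) ab(1,2) by auto
        then show ?thesis unfolding m_def by linarith
      qed
      finally show ?thesis using eq by simp
    qed
  qed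
  have F: "h t = ((b - t) * h a + (t - a) * h b) / (b - a)"
    if tp: "tea_pair (w a) (w b)" "a < b" "a \<le> t" "t \<le> b" for a b t
  proof -
    have "((b - t)/(b - a)) *\<^sub>R w a + ((t - a)/(b - a)) *\<^sub>R w b
        = ((b - t)/(b - a) * (1 - a) + (t - a)/(b - a) * (1 - b)) *\<^sub>R u
          + ((b - t)/(b - a) * a + (t - a)/(b - a) * b) *\<^sub>R v"
      unfolding w_def scaleR_add_right scaleR_scaleR scaleR_add_left by (simp add: ac_simps)
    also have "(b - t)/(b - a) * (1 - a) + (t - a)/(b - a) * (1 - b) = 1 - t"
    proof -
      have "(b - t)/(b - a) * (1 - a) + (t - a)/(b - a) * (1 - b) = ((b - t) * (1 - a) + (t - a) * (1 - b))/(b - a)"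
        by (simp add: add_divide_distrib)
      also have "(b - t) * (1 - a) + (t - a) * (1 - b) = (1 - t) * (b - a)" by (simp add: algebra_simps)
      finally show ?thesis using tp(2) by simp
    qed
    also have "(b - t)/(b - a) * a + (t - a)/(b - a) * b = t"
    proof -
      have "(b - t)/(b - a) * a + (t - a)/(b - a) * b = ((b - t) * a + (t - a) * b)/(b - a)"
        by (simp add: add_divide_distrib)
      also have "(b - t) * a + (t - a) * b = t * (b - a)" by (simp add: algebra_simps)
      finally show ?thesis using tp(2) by simp
    qed
    finally have wt: "w t = ((b - t)/(b - a)) *\<^sub>R w a + ((t - a)/(b - a)) *\<^sub>R w b"
      unfolding w_def by simp
    have "h t = (b - t)/(b - a) * h a + (t - a)/(b - a) * h b"
      unfolding h_def wt by (rule tea_scale) (use tp in \<open>auto simp: tea_pair_def\<close>)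
    then show ?thesis by (simp add: add_divide_distrib)
  qed
  define L where "L t = h 0 + t * real n * (h (1 / real n) - h 0)" for t
  have claim: "\<forall>t\<in>{0..real k / real n}. h t = L t" if "1 \<le> k" "k \<le> n" for k :: nat
    using that
  proof (induction k)
    case 0 then show ?case by simp
  next
    case (Suc k)
    show ?case
    proof (cases "k = 0")
      case True
      have tp: "tea_pair (w 0) (w (1 / real n))"
        by (rule local) (use npos Suc.prems True in \<open>auto simp: field_simps\<close>)
      show ?thesis
      proof
        fix t assume t: "t \<in> {0..real (Suc k) / real n}"
        have "h t = ((1 / real n - t) * h 0 + (t - 0) * h (1 / real n)) / (1 / real n - 0)"
          by (rule F[OF tp]) (use t True npos in auto)
        then have "real n * h t + t * (real n * (real n * h 0)) =
            real n * h 0 + t * (real n * (real n * h (1 / real n)))" using npos by (simp add: field_simps)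
        then have "real n * (h t + t * (real n * h 0)) = real n * (h 0 + t * (real n * h (1 / real n)))"
          by (simp add: algebra_simps)
        then have "h t + t * (real n * h 0) = h 0 + t * (real n * h (1 / real n))" using npos by simp
        then show "h t = L t" unfolding L_def by (simp add: algebra_simps)
      qed
    next
      case False
      hence IH: "\<forall>t\<in>{0..real k / real n}. h t = L t" using Suc by simp
      define a where "a = (real k - 1) / real n"
      define b where "b = (real k + 1) / real n"
      define c where "c = real k / real n"
      have k1: "real k \<ge> 1" using False by simp
      have kn: "real k + 1 \<le> real n" using Suc.prems by simp
      have ab: "a < b" "a \<le> c" "c \<le> b" "0 \<le> a" unfolding a_def b_def c_def using npos k1
        by (auto simp: divide_right_mono divide_strict_right_mono)
      have b1: "b \<le> 1" unfolding b_def using kn npos by simp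
      have tp: "tea_pair (w a) (w b)"
        by (rule local) (use ab b1 npos in \<open>auto simp: a_def b_def field_simps\<close>)
      have ha: "h a = L a" using IH ab unfolding c_def by auto
      have hc: "h c = L c" using IH unfolding c_def using npos by auto
      have "h c = ((b - c) * h a + (c - a) * h b) / (b - a)" using F[OF tp ab(1-3)] .
      moreover have bc: "b - c = c - a" unfolding a_def b_def c_def by (simp only: diff_divide_distrib[symmetric]) simp
      moreover have ba: "b - a = 2 * (c - a)" unfolding a_def b_def c_def by (simp only: diff_divide_distrib[symmetric]) simp
      moreover have ca: "c - a > 0" using ab bc by linarith
      ultimately have "h c = ((c - a) * (h a + h b)) / ((c - a) * 2)"
        by (simp add: algebra_simps)
      moreover have "((c - a) * (h a + h b)) / ((c - a) * 2) = (h a + h b) / 2"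
        using ca by (intro mult_divide_mult_cancel_left) simp
      ultimately have "h c = (h a + h b) / 2" by simp
      hence hb1: "h b = 2 * L c - L a" using ha hc by simp
      have bd: "b = 2 * c - a" using bc by simp
      have "L b = 2 * L c - L a" unfolding L_def bd by (simp add: algebra_simps)
      hence hb: "h b = L b" using hb1 by simp
      have Lt: "L t = ((b - t) * L a + (t - a) * L b) / (b - a)" for t
        using ab(1) unfolding L_def by (simp add: field_simps)
      show ?thesis
      proof
        fix t assume t: "t \<in> {0..real (Suc k) / real n}"
        show "h t = L t"
        proof (cases "t \<le> c")
          case True then show ?thesis using IH t unfolding c_def by auto
        next
          case False
          have tb: "t \<le> b" using t unfolding b_def by (simp add: add.commute)
          have "h t = ((b - t) * h a + (t - a) * h b) / (b - a)"
            by (rule F[OF tp ab(1)]) (use False ab tb in auto)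
          then show ?thesis using ha hb Lt[of t] by simp
        qed
      qed
    qed
  qed
  have all: "\<forall>t\<in>{0..1}. h t = L t" using claim[of n] npos by simp
  have "norm (u + v) = norm ((2::real) *\<^sub>R w (1/2))" unfolding w_def
    by (simp add: algebra_simps)
  also have "\<dots> = 2 * h (1/2)" unfolding h_def by simp
  also have "\<dots> = 2 * L (1/2)" using all by simp
  also have "\<dots> = L 0 + L 1" unfolding L_def by (simp add: algebra_simps)
  also have "\<dots> = h 0 + h 1" using all by simp
  also have "\<dots> = norm u + norm v" unfolding h_def w_def by simp
  finally show ?thesis unfolding tea_pair_def .
qed

theorem mainTheorem13:
  fixes T :: "'a::banach \<Rightarrow> 'b::banach"
  assumes "finite_dim_space TYPE('a)"
    and "finite_dim_space TYPE('b)"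
    and "linear T"
    and "bij T"
  shows "preserves_parallel T \<longleftrightarrow> preserves_tea T"
proof
  assume P: "preserves_parallel T"
  show "preserves_tea T" unfolding preserves_tea_def
  proof (intro allI impI)
    fix x y :: 'a assume xy: "tea_pair x y"
    show "tea_pair (T x) (T y)"
    proof (cases "x = 0 \<or> y = 0")
      case True
      then show ?thesis using linear_0[OF assms(3)] unfolding tea_pair_def by auto
    next
      case False
      define z where "z t = (1 - t) *\<^sub>R x + t *\<^sub>R y" for t :: real
      have nz: "norm (z t) = (1 - t) * norm x + t * norm y" if "t \<in> {0..1}" for t
        unfolding z_def by (rule tea_scale) (use xy that in \<open>auto simp: tea_pair_def\<close>)
      have Tz: "T (z t) = (1 - t) *\<^sub>R T x + t *\<^sub>R T y" for t
        unfolding z_def using assms(3) by (simp add: linear_add linear_scale)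
      show ?thesis
      proof (rule key[of "T x" "T y", folded Tz])
        fix a b :: real assume a: "a \<in> {0..1}" and b: "b \<in> {0..1}"
        have "z a + z b = (2 - a - b) *\<^sub>R x + (a + b) *\<^sub>R y" unfolding z_def
          by (simp add: algebra_simps scaleR_2)
        hence "norm (z a + z b) = (2 - a - b) * norm x + (a + b) * norm y"
          using tea_scale[of x y "2 - a - b" "a + b"] xy a b by (auto simp: tea_pair_def)
        hence "parallel_pair (z a) (z b)" unfolding parallel_pair_def
          using nz[OF a] nz[OF b] by (intro exI[of _ 1]) (simp add: algebra_simps)
        then show "parallel_pair (T (z a)) (T (z b))" using P unfolding preserves_parallel_def by blast
      next
        fix t :: real assume t: "t \<in> {0..1}"
        have "norm (z t) > 0"
        proof (cases "t = 0")
          case True then show ?thesis using nz[OF t] False by simp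
        next
          case f: False
          have "t * norm y > 0" using f t False by auto
          moreover have "(1 - t) * norm x \<ge> 0" using t by auto
          ultimately show ?thesis using nz[OF t] by linarith
        qed
        hence "z t \<noteq> 0" by auto
        moreover have "inj T" using assms(4) bij_is_inj by blast
        ultimately show "T (z t) \<noteq> 0" using linear_0[OF assms(3)] by (metis injD)
      qed
    qed
  qed
next
  assume P: "preserves_tea T"
  show "preserves_parallel T" unfolding preserves_parallel_def
  proof (intro allI impI)
    fix x y :: 'a assume "parallel_pair x y"
    then obtain c where c: "\<bar>c\<bar> = 1" "norm (x + c *\<^sub>R y) = norm x + norm y"
      unfolding parallel_pair_def by auto
    have "tea_pair x (c *\<^sub>R y)" using c unfolding tea_pair_def by simp
    hence "tea_pair (T x) (T (c *\<^sub>R y))" using P unfolding preserves_tea_def by blast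
    hence "norm (T x + c *\<^sub>R T y) = norm (T x) + norm (T y)"
      using c(1) assms(3) unfolding tea_pair_def by (simp add: linear_scale)
    then show "parallel_pair (T x) (T y)" unfolding parallel_pair_def using c(1) by blast
  qed
qed

end
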